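(* Let $B=\mathrm{Borel}(m_1,\dots,m_r)$ be a Borel ideal of $S=k[x_1,\dots,x_n]$ with $r\ge2$ and $d=\deg(m_r)\ge\deg(m_i)$ for all $i$. Put $B'=\mathrm{Borel}(m_1,\dots,m_{r-1})$ and $B''=\mathrm{Borel}(m_r)\cap B'$. Then $B''$ is generated entirely in degree $d$, and for all $i,j$ \[b_{i,j}(B)=b_{i,j}(B')+b_{i,j}(\mathrm{Borel}(m_r))-b_{i,j}(B'').\]
   Context: A Borel ideal is a monomial ideal closed under Borel moves $\mu\mapsto\mu\frac{x_{a_1}}{x_{b_1}}\cdots\frac{x_{a_s}}{x_{b_s}}$ ($a_t<b_t$, all $x_{b_t}\mid\mu$); $\mathrm{Borel}(T)$ is the smallest Borel ideal containing the set of monomials $T$. $b_{i,j}(I)=\dim_k\operatorname{Tor}_i^S(I,k)_j$ are the graded Betti numbers of $I$ over $S$. *)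

theory Defs
  imports Main "Jordan_Normal_Form.DL_Rank"
begin

text \<open>Monomials of S = k[x_1,...,x_n] are exponent vectors a :: nat => nat,
  where index i (0 <= i < n) stands for the variable x_(i+1), and a l = 0 for l >= n.
  A monomial ideal is identified with the set of monomials it contains.\<close>

definition mons :: "nat \<Rightarrow> (nat \<Rightarrow> nat) set" where
  "mons n = {a. \<forall>l\<ge>n. a l = 0}"

definition mdeg :: "nat \<Rightarrow> (nat \<Rightarrow> nat) \<Rightarrow> nat" where
  "mdeg n a = (\<Sum>l<n. a l)"

definition mdvd :: "(nat \<Rightarrow> nat) \<Rightarrow> (nat \<Rightarrow> nat) \<Rightarrow> bool" where
  "mdvd a b \<longleftrightarrow> (\<forall>l. a l \<le> b l)"

text \<open>Elementary Borel move mu * x_a / x_b with a < b and x_b | mu.\<close>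
definition borel_move :: "(nat \<Rightarrow> nat) \<Rightarrow> nat \<Rightarrow> nat \<Rightarrow> nat \<Rightarrow> nat" where
  "borel_move mu a b = (\<lambda>l. if l = a then mu l + 1 else if l = b then mu l - 1 else mu l)"

definition monomial_ideal :: "nat \<Rightarrow> (nat \<Rightarrow> nat) set \<Rightarrow> bool" where
  "monomial_ideal n I \<longleftrightarrow> I \<subseteq> mons n \<and>
     (\<forall>u\<in>I. \<forall>v\<in>mons n. mdvd u v \<longrightarrow> v \<in> I)"

definition borel_ideal :: "nat \<Rightarrow> (nat \<Rightarrow> nat) set \<Rightarrow> bool" where
  "borel_ideal n I \<longleftrightarrow> monomial_ideal n I \<and>
     (\<forall>mu\<in>I. \<forall>a b. a < b \<longrightarrow> b < n \<longrightarrow> 1 \<le> mu b \<longrightarrow> borel_move mu a b \<in> I)"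

definition Borel :: "nat \<Rightarrow> (nat \<Rightarrow> nat) set \<Rightarrow> (nat \<Rightarrow> nat) set" where
  "Borel n T = \<Inter>{I. borel_ideal n I \<and> T \<subseteq> I}"

definition mingens :: "(nat \<Rightarrow> nat) set \<Rightarrow> (nat \<Rightarrow> nat) set" where
  "mingens I = {g\<in>I. \<forall>h\<in>I. mdvd h g \<longrightarrow> h = g}"

text \<open>Koszul complex I (x) K(x_1,...,x_n) in multidegree alpha. Its i-th module has
  k-basis m (x) e_F with F a subset of {0..<n} of size i, m in I and m * x_F = x^alpha.
  Subsets F are represented as strictly increasing lists (elements of subseqs [0..<n]).\<close>
definition kos_ok :: "(nat \<Rightarrow> nat) set \<Rightarrow> (nat \<Rightarrow> nat) \<Rightarrow> nat list \<Rightarrow> bool" where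
  "kos_ok I alpha F \<longleftrightarrow> (\<forall>l\<in>set F. 1 \<le> alpha l) \<and>
     (\<lambda>l. if l \<in> set F then alpha l - 1 else alpha l) \<in> I"

definition kos_basis :: "nat \<Rightarrow> (nat \<Rightarrow> nat) set \<Rightarrow> (nat \<Rightarrow> nat) \<Rightarrow> nat \<Rightarrow> nat list list" where
  "kos_basis n I alpha i = filter (\<lambda>F. length F = i \<and> kos_ok I alpha F) (subseqs [0..<n])"

text \<open>Coefficient of e_G in the Koszul differential of e_F:
  d(e_F) = sum over j in F of (-1)^(#{l in F. l < j}) x_j e_(F - {j}).\<close>
definition kos_coeff :: "nat list \<Rightarrow> nat list \<Rightarrow> 'k::field" where
  "kos_coeff F G = (if \<exists>j\<in>set F. set G = set F - {j}
      then (let j = (THE j. j \<in> set F \<and> set G = set F - {j})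
            in (-1) ^ card {l\<in>set F. l < j})
      else 0)"

text \<open>Matrix of the differential from homological degree i (columns) to i-1 (rows).\<close>
definition kos_mat :: "'k::field itself \<Rightarrow> nat \<Rightarrow> (nat \<Rightarrow> nat) set \<Rightarrow> (nat \<Rightarrow> nat) \<Rightarrow> nat \<Rightarrow> 'k mat" where
  "kos_mat _ n I alpha i =
     (let R = kos_basis n I alpha (i - 1); C = kos_basis n I alpha i
      in mat (length R) (length C) (\<lambda>(r, c). kos_coeff (C ! c) (R ! r)))"

definition kos_rank :: "'k::field itself \<Rightarrow> nat \<Rightarrow> (nat \<Rightarrow> nat) set \<Rightarrow> (nat \<Rightarrow> nat) \<Rightarrow> nat \<Rightarrow> nat" where
  "kos_rank K n I alpha i =
     (if i = 0 then 0
      else vec_space.rank (length (kos_basis n I alpha (i - 1))) (kos_mat K n I alpha i))"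

text \<open>Multigraded Betti number: dim_k Tor_i^S(I,k)_alpha = dim_k H_i(I (x) K)_alpha.\<close>
definition multibetti :: "'k::field itself \<Rightarrow> nat \<Rightarrow> (nat \<Rightarrow> nat) set \<Rightarrow> nat \<Rightarrow> (nat \<Rightarrow> nat) \<Rightarrow> nat" where
  "multibetti K n I i alpha =
     length (kos_basis n I alpha i) - kos_rank K n I alpha i - kos_rank K n I alpha (i + 1)"

text \<open>Graded Betti number b_(i,j)(I) = dim_k Tor_i^S(I,k)_j (sum over multidegrees of degree j).\<close>
definition betti :: "'k::field itself \<Rightarrow> nat \<Rightarrow> (nat \<Rightarrow> nat) set \<Rightarrow> nat \<Rightarrow> nat \<Rightarrow> nat" where
  "betti K n I i j = (\<Sum>alpha\<in>{a\<in>mons n. mdeg n a = j}. multibetti K n I i alpha)"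

end

theory Submission
  imports Defs "HOL-Library.Function_Algebras"
begin



lemma mons_borel: "borel_ideal n (mons n)"
  unfolding borel_ideal_def monomial_ideal_def mons_def borel_move_def by auto

lemma Borel_sub: "T \<subseteq> Borel n T"
  unfolding Borel_def by auto

lemma Borel_least: "borel_ideal n I \<Longrightarrow> T \<subseteq> I \<Longrightarrow> Borel n T \<subseteq> I"
  unfolding Borel_def by auto

lemma Borel_is_borel:
  assumes "T \<subseteq> mons n" shows "borel_ideal n (Borel n T)"
proof -
  let ?F = "{I. borel_ideal n I \<and> T \<subseteq> I}"
  have ne: "mons n \<in> ?F" using mons_borel assms by auto
  have 1: "\<Inter> ?F \<subseteq> mons n" using ne by blast
  have 2: "\<forall>u\<in>\<Inter> ?F. \<forall>v\<in>mons n. mdvd u v \<longrightarrow> v \<in> \<Inter> ?F"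
    unfolding borel_ideal_def monomial_ideal_def by blast
  have 3: "\<forall>mu\<in>\<Inter> ?F. \<forall>a b. a < b \<longrightarrow> b < n \<longrightarrow> 1 \<le> mu b \<longrightarrow> borel_move mu a b \<in> \<Inter> ?F"
    unfolding borel_ideal_def by blast
  have "monomial_ideal n (\<Inter> ?F)" unfolding monomial_ideal_def[of n "\<Inter> ?F"] using 1 2 by (intro conjI)
  then have "borel_ideal n (\<Inter> ?F)" unfolding borel_ideal_def[of n "\<Inter> ?F"] using 3 by (intro conjI)
  then show ?thesis unfolding Borel_def .
qed

lemma Borel_mons: "T \<subseteq> mons n \<Longrightarrow> Borel n T \<subseteq> mons n"
  using Borel_is_borel unfolding borel_ideal_def monomial_ideal_def by blast

lemma Borel_mono: "T1 \<subseteq> T2 \<Longrightarrow> T2 \<subseteq> mons n \<Longrightarrow> Borel n T1 \<subseteq> Borel n T2"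
  by (meson Borel_is_borel Borel_least Borel_sub order_trans)

lemma Borel_Un:
  assumes "T1 \<subseteq> mons n" "T2 \<subseteq> mons n"
  shows "Borel n (T1 \<union> T2) = Borel n T1 \<union> Borel n T2"
proof
  have b1: "borel_ideal n (Borel n T1)" and b2: "borel_ideal n (Borel n T2)"
    using Borel_is_borel assms by auto
  have "borel_ideal n (Borel n T1 \<union> Borel n T2)"
    using b1 b2 unfolding borel_ideal_def monomial_ideal_def by blast
  moreover have "T1 \<union> T2 \<subseteq> Borel n T1 \<union> Borel n T2" using Borel_sub by blast
  ultimately show "Borel n (T1 \<union> T2) \<subseteq> Borel n T1 \<union> Borel n T2" by (rule Borel_least)
next
  show "Borel n T1 \<union> Borel n T2 \<subseteq> Borel n (T1 \<union> T2)"
    using Borel_mono assms by (metis Un_least Un_upper1 Un_upper2)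
qed

lemma mdeg_move:
  assumes "a < b" "b < n" "1 \<le> mu b"
  shows "mdeg n (borel_move mu a b) = mdeg n mu"
proof -
  have "\<And>l. borel_move mu a b l + (if l = b then 1 else 0) = mu l + (if l = a then 1 else 0)"
    using assms unfolding borel_move_def by auto
  then have "(\<Sum>l<n. borel_move mu a b l + (if l = b then 1 else 0)) = (\<Sum>l<n. mu l + (if l = a then 1 else 0))"
    by simp
  moreover have "(\<Sum>l<n. (if l = b then 1 else 0::nat)) = 1" "(\<Sum>l<n. (if l = a then 1 else 0::nat)) = 1"
    using assms by (simp_all add: sum.delta)
  ultimately show ?thesis unfolding mdeg_def sum.distrib by simp
qed

lemma mdeg_mono: "mdvd u v \<Longrightarrow> mdeg n u \<le> mdeg n v"
  unfolding mdeg_def mdvd_def by (simp add: sum_mono)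

lemma Borel_deg_ge:
  assumes "T \<subseteq> mons n" "\<forall>t\<in>T. D \<le> mdeg n t" "w \<in> Borel n T"
  shows "D \<le> mdeg n w"
proof -
  let ?I = "{w\<in>mons n. D \<le> mdeg n w}"
  have "borel_ideal n ?I"
    unfolding borel_ideal_def monomial_ideal_def
  proof (intro conjI ballI allI impI)
    show "?I \<subseteq> mons n" by auto
  next
    fix u v assume "u \<in> ?I" "v \<in> mons n" "mdvd u v" then show "v \<in> ?I"
      using mdeg_mono[of u v n] by auto
  next
    fix mu a b assume "mu \<in> ?I" "a < b" "b < n" "1 \<le> mu b"
    then show "borel_move mu a b \<in> ?I"
      using mdeg_move[of a b n mu] mons_borel unfolding borel_ideal_def by auto
  qed
  moreover have "T \<subseteq> ?I" using assms by auto
  ultimately show ?thesis using Borel_least assms(3) by blast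
qed



lemma mono_step_closed:
  assumes J: "J \<subseteq> mons n" and step: "\<And>u l. u \<in> J \<Longrightarrow> l < n \<Longrightarrow> u(l := u l + 1) \<in> J"
  shows "u \<in> J \<Longrightarrow> v \<in> mons n \<Longrightarrow> mdvd u v \<Longrightarrow> v \<in> J"
proof (induction "\<Sum>l<n. v l - u l" arbitrary: u rule: less_induct)
  case less
  show ?case
  proof (cases "\<exists>l<n. u l < v l")
    case False
    have "u = v"
    proof
      fix l show "u l = v l"
      proof (cases "l < n")
        case True then show ?thesis using False less.prems unfolding mdvd_def
          by (metis le_neq_implies_less)
      next
        case False then show ?thesis using less.prems J unfolding mons_def by auto
      qed
    qed
    then show ?thesis using less.prems by simp
  next
    case True
    then obtain l where l: "l < n" "u l < v l" by auto
    let ?u = "u(l := u l + 1)"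
    have "?u \<in> J" using step less.prems l by auto
    moreover have "mdvd ?u v" using less.prems l unfolding mdvd_def by auto
    moreover have "(\<Sum>k<n. v k - ?u k) < (\<Sum>k<n. v k - u k)"
    proof (rule sum_strict_mono_ex1)
      show "\<forall>x\<in>{..<n}. v x - ?u x \<le> v x - u x" by auto
      show "\<exists>a\<in>{..<n}. v a - ?u a < v a - u a" using l by (intro bexI[of _ l]) auto
    qed simp
    ultimately show ?thesis using less by blast
  qed
qed

lemma maxvar_exists:
  assumes "w \<in> mons n" "0 < mdeg n w"
  shows "\<exists>q<n. 1 \<le> w q \<and> (\<forall>l. q < l \<longrightarrow> w l = 0)"
proof -
  let ?S = "{l. l < n \<and> 1 \<le> w l}"
  have "?S \<noteq> {}"
  proof
    assume "?S = {}"
    then have "\<forall>l<n. w l = 0" by auto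
    then have "mdeg n w = 0" unfolding mdeg_def by simp
    then show False using assms(2) by simp
  qed
  moreover have "finite ?S" by auto
  ultimately have "Max ?S \<in> ?S" by (intro Max_in)
  moreover have "\<forall>l. Max ?S < l \<longrightarrow> w l = 0"
  proof (intro allI impI)
    fix l assume "Max ?S < l"
    show "w l = 0"
    proof (cases "l < n")
      case True then show ?thesis using \<open>Max ?S < l\<close> \<open>finite ?S\<close> Max_ge[of ?S l] by fastforce
    next
      case False then show ?thesis using assms(1) unfolding mons_def by auto
    qed
  qed
  ultimately show ?thesis by blast
qed



lemma EK:
  assumes Tm: "T \<subseteq> mons n" and TD: "\<forall>t\<in>T. mdeg n t \<le> D"
  shows "w \<in> Borel n T \<Longrightarrow> D < mdeg n w \<Longrightarrow> q < n \<Longrightarrow> 1 \<le> w q \<Longrightarrow> (\<forall>l. q < l \<longrightarrow> w l = 0)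
    \<Longrightarrow> w(q := w q - 1) \<in> Borel n T"
proof -
  let ?B = "Borel n T"
  have bB: "borel_ideal n ?B" using Borel_is_borel Tm by auto
  have Bm: "?B \<subseteq> mons n" using Borel_mons Tm by auto
  have Bmul: "\<And>u v. u \<in> ?B \<Longrightarrow> v \<in> mons n \<Longrightarrow> mdvd u v \<Longrightarrow> v \<in> ?B"
    using bB unfolding borel_ideal_def monomial_ideal_def by blast
  have Bmove: "\<And>mu a b. mu \<in> ?B \<Longrightarrow> a < b \<Longrightarrow> b < n \<Longrightarrow> 1 \<le> mu b \<Longrightarrow> borel_move mu a b \<in> ?B"
    using bB unfolding borel_ideal_def by blast
  have upd_mons: "\<And>u l c. u \<in> mons n \<Longrightarrow> l < n \<Longrightarrow> u(l := c) \<in> mons n"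
    unfolding mons_def by auto
  define J where "J = {w \<in> ?B. D < mdeg n w \<longrightarrow>
      (\<forall>q<n. 1 \<le> w q \<longrightarrow> (\<forall>l. q < l \<longrightarrow> w l = 0) \<longrightarrow> w(q := w q - 1) \<in> ?B)}"
  have Jm: "J \<subseteq> mons n" using Bm unfolding J_def by auto
  have step: "u(l := u l + 1) \<in> J" if u: "u \<in> J" and l: "l < n" for u l
  proof -
    let ?v = "u(l := u l + 1)"
    have um: "u \<in> mons n" using u Jm by auto
    have vm: "?v \<in> mons n" using upd_mons[OF um l] .
    have vB: "?v \<in> ?B" using Bmul[of u ?v] u vm unfolding J_def mdvd_def by auto
    have degv: "mdeg n ?v = mdeg n u + 1"
    proof -
      have "(\<Sum>k<n. ?v k) = (\<Sum>k<n. u k + (if k = l then 1 else 0))"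
        by (rule sum.cong) auto
      then show ?thesis unfolding mdeg_def sum.distrib using l by (simp add: sum.delta)
    qed
    show ?thesis unfolding J_def
    proof (intro CollectI conjI impI allI vB)
      fix q assume "D < mdeg n ?v" "q < n" "1 \<le> ?v q" and above: "\<forall>la. q < la \<longrightarrow> ?v la = 0"
      show "?v(q := ?v q - 1) \<in> ?B"
      proof (cases "q = l")
        case True then have "?v(q := ?v q - 1) = u" by auto
        then show ?thesis using u unfolding J_def by auto
      next
        case False
        have "\<not> q < l"
        proof
          assume "q < l" then have "?v l = 0" using above by blast
          then show False by simp
        qed
        then have lq: "l < q" using False by simp
        have uq: "1 \<le> u q" using \<open>1 \<le> ?v q\<close> False by auto
        have uabove: "\<forall>k. q < k \<longrightarrow> u k = 0"
        proof (intro allI impI)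
          fix k assume "q < k" then have "k \<noteq> l" using lq by simp
          then show "u k = 0" using above[rule_format, OF \<open>q < k\<close>] by simp
        qed
        show ?thesis
        proof (cases "D < mdeg n u")
          case True
          then have w1: "u(q := u q - 1) \<in> ?B" using u \<open>q < n\<close> uq uabove unfolding J_def by auto
          have "?v(q := ?v q - 1) = (u(q := u q - 1))(l := u l + 1)" using False by (auto simp: fun_eq_iff)
          moreover have "(u(q := u q - 1))(l := u l + 1) \<in> mons n" using upd_mons um l \<open>q<n\<close> by auto
          ultimately show ?thesis using Bmul[OF w1] False unfolding mdvd_def by auto
        next
          case False
          have "?v(q := ?v q - 1) = borel_move u l q"
            using \<open>q \<noteq> l\<close> unfolding borel_move_def by (auto simp: fun_eq_iff)
          then show ?thesis using Bmove[of u l q] u lq \<open>q < n\<close> uq unfolding J_def by auto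
        qed
      qed
    qed
  qed
  have "monomial_ideal n J"
    unfolding monomial_ideal_def using Jm mono_step_closed[OF Jm step] by blast
  moreover have "borel_move u a b \<in> J" if u: "u \<in> J" and ab: "a < b" "b < n" "1 \<le> u b" for u a b
  proof -
    let ?v = "borel_move u a b"
    have um: "u \<in> mons n" using u Jm by auto
    have vB: "?v \<in> ?B" using Bmove u ab unfolding J_def by auto
    have degv: "mdeg n ?v = mdeg n u" using mdeg_move ab by auto
    have uJ: "\<And>q. D < mdeg n u \<Longrightarrow> q < n \<Longrightarrow> 1 \<le> u q \<Longrightarrow> (\<forall>l. q < l \<longrightarrow> u l = 0) \<Longrightarrow> u(q := u q - 1) \<in> ?B"
      using u unfolding J_def by auto
    show ?thesis unfolding J_def
    proof (intro CollectI conjI impI allI vB)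
      fix q assume D: "D < mdeg n ?v" and q: "q < n" "1 \<le> ?v q" and above: "\<forall>l. q < l \<longrightarrow> ?v l = 0"
      have Du: "D < mdeg n u" using D degv by simp
      show "?v(q := ?v q - 1) \<in> ?B"
      proof (cases "b \<le> q")
        case True
        have uabove: "\<forall>l. q < l \<longrightarrow> u l = 0" using above True ab
          unfolding borel_move_def by (metis order.strict_trans2 less_irrefl nat_less_le)
        have uq: "1 \<le> u q" using q ab True unfolding borel_move_def by (auto split: if_splits)
        have w1: "u(q := u q - 1) \<in> ?B" using uJ[OF Du q(1) uq uabove] .
        have b1: "1 \<le> (u(q := u q - 1)) b"
          using q ab True unfolding borel_move_def by (auto split: if_splits)
        have eq: "?v(q := ?v q - 1) = borel_move (u(q := u q - 1)) a b"
          using ab True unfolding borel_move_def by (auto simp: fun_eq_iff)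
        show ?thesis unfolding eq by (rule Bmove[OF w1 ab(1,2) b1])
      next
        case False
        then have qb: "q < b" by simp
        have vb: "?v b = 0" using above qb by auto
        then have ub: "u b = 1" using ab unfolding borel_move_def by auto
        have uabove: "\<forall>l. b < l \<longrightarrow> u l = 0" using above qb ab
          unfolding borel_move_def by (metis less_trans less_not_refl)
        have w1: "u(b := u b - 1) \<in> ?B" using uJ[OF Du ab(2) ab(3) uabove] .
        have aq: "a \<le> q" using above q ab unfolding borel_move_def
          by (metis add_eq_0_iff_both_eq_0 less_not_refl not_le one_neq_zero)
        show ?thesis
        proof (cases "q = a")
          case True
          have "?v(q := ?v q - 1) = u(b := u b - 1)"
            using True ab ub unfolding borel_move_def by (auto simp: fun_eq_iff)
          then show ?thesis using w1 by simp
        next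
          case False
          then have aq': "a < q" using aq by simp
          have q1: "1 \<le> (u(b := u b - 1)) q" using q qb False unfolding borel_move_def by auto
          have eq: "?v(q := ?v q - 1) = borel_move (u(b := u b - 1)) a q"
            using False qb ab ub unfolding borel_move_def by (auto simp: fun_eq_iff)
          show ?thesis unfolding eq by (rule Bmove[OF w1 aq' q(1) q1])
        qed
      qed
    qed
  qed
  ultimately have "borel_ideal n J" unfolding borel_ideal_def by blast
  moreover have "T \<subseteq> J" using Borel_sub TD unfolding J_def by fastforce
  ultimately have "?B \<subseteq> J" by (rule Borel_least)
  then show "w \<in> ?B \<Longrightarrow> D < mdeg n w \<Longrightarrow> q < n \<Longrightarrow> 1 \<le> w q \<Longrightarrow> (\<forall>l. q < l \<longrightarrow> w l = 0)
    \<Longrightarrow> w(q := w q - 1) \<in> ?B" unfolding J_def by blast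
qed



context vector_space begin

lemma indep_intro_fin:
  assumes "finite X" "\<And>a v. (\<Sum>v\<in>X. a v *s v) = 0 \<Longrightarrow> v \<in> X \<Longrightarrow> a v = 0"
  shows "independent X"
  using assms dependent_finite by blast

lemma dim_sums_Int_fin:
  assumes "subspace S" "subspace T" "finite W" "S \<subseteq> span W" "T \<subseteq> span W"
  shows "dim {x + y |x y. x \<in> S \<and> y \<in> T} + dim(S \<inter> T) = dim S + dim T" (is "dim ?ST + _ = _")
proof -
  obtain B where B: "B \<subseteq> S \<inter> T" "S \<inter> T \<subseteq> span B"
             and indB: "independent B"
             and cardB: "card B = dim (S \<inter> T)"
    using basis_exists by metis
  then obtain C D where "B \<subseteq> C" "C \<subseteq> S" "independent C" "S \<subseteq> span C"
                    and "B \<subseteq> D" "D \<subseteq> T" "independent D" "T \<subseteq> span D"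
    using maximal_independent_subset_extend
    by (metis Int_subset_iff \<open>B \<subseteq> S \<inter> T\<close> indB)
  have fC: "finite C" using independent_span_bound[OF assms(3) \<open>independent C\<close>] \<open>C \<subseteq> S\<close> assms(4) by blast
  have fD: "finite D" using independent_span_bound[OF assms(3) \<open>independent D\<close>] \<open>D \<subseteq> T\<close> assms(5) by blast
  have fB: "finite B" using fC \<open>B \<subseteq> C\<close> finite_subset by blast
  have Beq: "B = C \<inter> D"
  proof (rule spanning_subset_independent [symmetric])
    show "independent (C \<inter> D)"
      by (meson \<open>independent C\<close> independent_mono inf.cobounded1)
  qed (use B \<open>C \<subseteq> S\<close> \<open>D \<subseteq> T\<close> \<open>B \<subseteq> C\<close> \<open>B \<subseteq> D\<close> in auto)
  then have Deq: "D = B \<union> (D - C)"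
    by blast
  have CUD: "C \<union> D \<subseteq> ?ST"
  proof (simp, intro conjI)
    show "C \<subseteq> ?ST"
      using span_zero span_minimal [OF _ \<open>subspace T\<close>] \<open>C \<subseteq> S\<close> by force
    show "D \<subseteq> ?ST"
      using span_zero span_minimal [OF _ \<open>subspace S\<close>] \<open>D \<subseteq> T\<close> by force
  qed
  have "a v = 0" if 0: "(\<Sum>v\<in>C. a v *s v) + (\<Sum>v\<in>D - C. a v *s v) = 0"
                 and v: "v \<in> C \<union> (D-C)" for a v
  proof -
    have CsS: "\<And>x. x \<in> C \<Longrightarrow> a x *s x \<in> S"
      using \<open>C \<subseteq> S\<close> \<open>subspace S\<close> subspace_scale by auto
    have eq: "(\<Sum>v\<in>D - C. a v *s v) = - (\<Sum>v\<in>C. a v *s v)"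
      using that add_eq_0_iff by blast
    have "(\<Sum>v\<in>D - C. a v *s v) \<in> S"
      by (simp add: eq CsS \<open>subspace S\<close> subspace_neg subspace_sum)
    moreover have "(\<Sum>v\<in>D - C. a v *s v) \<in> T"
      apply (rule subspace_sum [OF \<open>subspace T\<close>])
      by (meson DiffD1 \<open>D \<subseteq> T\<close> \<open>subspace T\<close> subset_eq subspace_def)
    ultimately have "(\<Sum>v \<in> D-C. a v *s v) \<in> span B"
      using B by blast
    then obtain e where e: "(\<Sum>v\<in>B. e v *s v) = (\<Sum>v \<in> D-C. a v *s v)"
      using span_finite [OF fB] by force
    define cc where "cc x = (if x \<in> B then a x + e x else a x)" for x
    have [simp]: "C \<inter> B = B" "D \<inter> B = B" "C \<inter> - B = C-D" "B \<inter> (D - C) = {}"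
      using \<open>B \<subseteq> C\<close> \<open>B \<subseteq> D\<close> Beq by blast+
    have f2: "(\<Sum>v\<in>C \<inter> D. e v *s v) = (\<Sum>v\<in>D - C. a v *s v)"
      using Beq e by presburger
    have f3: "(\<Sum>v\<in>C \<union> D. a v *s v) = (\<Sum>v\<in>C - D. a v *s v) + (\<Sum>v\<in>D - C. a v *s v) + (\<Sum>v\<in>C \<inter> D. a v *s v)"
      using fC fD sum.union_diff2 by blast
    have f4: "(\<Sum>v\<in>C \<union> (D - C). a v *s v) = (\<Sum>v\<in>C. a v *s v) + (\<Sum>v\<in>D - C. a v *s v)"
      by (meson Diff_disjoint fC fD finite_Diff sum.union_disjoint)
    have "(\<Sum>v\<in>C. cc v *s v) = 0"
      using 0 f2 f3 f4
      apply (simp add: cc_def Beq fC sum.If_cases algebra_simps sum.distrib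
          if_distrib if_distribR)
      apply (simp add: add.commute add.left_commute diff_eq)
      done
    then have "\<And>v. v \<in> C \<Longrightarrow> cc v = 0"
      using independentD[OF \<open>independent C\<close> fC order_refl] by blast
    then have C0: "\<And>v. v \<in> C - B \<Longrightarrow> a v = 0"
      by (simp add: cc_def Beq) meson
    then have [simp]: "(\<Sum>x\<in>C - B. a x *s x) = 0"
      by simp
    have "(\<Sum>x\<in>C. a x *s x) = (\<Sum>x\<in>B. a x *s x)"
    proof -
      have "C - D = C - B"
        using Beq by blast
      then show ?thesis
        using Beq \<open>(\<Sum>x\<in>C - B. a x *s x) = 0\<close> f3 f4 by auto
    qed
    with 0 have Dcc0: "(\<Sum>v\<in>D. a v *s v) = 0"
      by (subst Deq) (simp add: fB fD sum_Un)
    then have D0: "\<And>v. v \<in> D \<Longrightarrow> a v = 0"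
      using independentD[OF \<open>independent D\<close> fD order_refl] by blast
    show ?thesis
      using v C0 D0 Beq by blast
  qed
  then have "independent (C \<union> (D - C))"
    by (intro indep_intro_fin) (simp_all add: fC fD sum_Un del: Un_Diff_cancel)
  then have indCUD: "independent (C \<union> D)" by simp
  have "dim (S \<inter> T) = card B"
    by (rule dim_unique [OF B indB refl])
  moreover have "dim S = card C"
    by (metis \<open>C \<subseteq> S\<close> \<open>independent C\<close> \<open>S \<subseteq> span C\<close> basis_card_eq_dim)
  moreover have "dim T = card D"
    by (metis \<open>D \<subseteq> T\<close> \<open>independent D\<close> \<open>T \<subseteq> span D\<close> basis_card_eq_dim)
  moreover have "dim ?ST = card(C \<union> D)"
  proof -
    have *: "\<And>x y. \<lbrakk>x \<in> S; y \<in> T\<rbrakk> \<Longrightarrow> x + y \<in> span (C \<union> D)"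
      by (meson \<open>S \<subseteq> span C\<close> \<open>T \<subseteq> span D\<close> span_add span_mono subsetCE sup.cobounded1 sup.cobounded2)
    show ?thesis
      by (auto intro: * dim_unique [OF CUD _ indCUD refl])
  qed
  ultimately show ?thesis
    using \<open>B = C \<inter> D\<close> [symmetric]
    by (simp add: fC fD card_Un_Int)
qed

lemma dim_span_Un_Int:
  assumes "finite X" "finite Y"
  shows "dim (span (X \<union> Y)) + dim (span X \<inter> span Y) = dim (span X) + dim (span Y)"
proof -
  have "span (X \<union> Y) = {x + y |x y. x \<in> span X \<and> y \<in> span Y}" by (rule span_Un)
  moreover have "dim {x + y |x y. x \<in> span X \<and> y \<in> span Y} + dim (span X \<inter> span Y) = dim (span X) + dim (span Y)"
    by (rule dim_sums_Int_fin[where W = "X \<union> Y"]) (use assms in \<open>auto intro: span_mono[THEN subsetD]\<close>)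
  ultimately show ?thesis by simp
qed

lemma rank_nullity_le:
  assumes fW: "finite W"
    and add: "\<And>x y. f (x + y) = f x + f y" and sc: "\<And>c x. f (c *s x) = c *s f x"
  shows "dim (f ` span W) + dim (span W \<inter> {x. f x = 0}) \<le> dim (span W)"
proof -
  let ?S = "span W"
  obtain B where B: "B \<subseteq> ?S \<inter> {x. f x = 0}" "?S \<inter> {x. f x = 0} \<subseteq> span B"
             and indB: "independent B" and cardB: "card B = dim (?S \<inter> {x. f x = 0})"
    using basis_exists by metis
  then obtain C where C: "B \<subseteq> C" "C \<subseteq> ?S" "independent C" "?S \<subseteq> span C"
    using maximal_independent_subset_extend[of B ?S] by blast
  have fC: "finite C" using independent_span_bound[OF fW \<open>independent C\<close>] C(2) by blast
  have dS: "dim ?S = card C" using C basis_card_eq_dim by metis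
  have f0: "f 0 = 0" using sc[of 0 0] by simp
  have fsum: "f (\<Sum>v\<in>X. u v *s v) = (\<Sum>v\<in>X. u v *s f v)" if "finite X" for X u
    using that by (induction X rule: finite_induct) (simp_all add: f0 add sc)
  have "f ` ?S \<subseteq> span (f ` (C - B))"
  proof
    fix y assume "y \<in> f ` ?S"
    then obtain x where x: "x \<in> ?S" "y = f x" by auto
    then have "x \<in> span C" using C by auto
    then obtain u where u: "x = (\<Sum>v\<in>C. u v *s v)" using span_finite[OF fC] by auto
    have "y = (\<Sum>v\<in>C. u v *s f v)" using x u fsum fC by simp
    also have "\<dots> = (\<Sum>v\<in>C - B. u v *s f v)"
    proof (rule sum.mono_neutral_right[OF fC])
      show "C - B \<subseteq> C" by auto
      show "\<forall>i\<in>C - (C - B). u i *s f i = 0" using B C by auto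
    qed
    also have "\<dots> \<in> span (f ` (C - B))"
      by (intro span_sum span_scale span_base) auto
    finally show "y \<in> span (f ` (C - B))" .
  qed
  then have "dim (f ` ?S) \<le> card (f ` (C - B))" using dim_le_card fC by blast
  also have "\<dots> \<le> card (C - B)" using fC card_image_le by blast
  also have "\<dots> = card C - card B" using fC C(1) card_Diff_subset finite_subset by metis
  finally show ?thesis using dS cardB C(1) fC card_mono by (metis le_diff_conv2 add.commute)
qed

end


definition fsc :: "'k::field \<Rightarrow> ('i \<Rightarrow> 'k) \<Rightarrow> 'i \<Rightarrow> 'k" where
  "fsc c f = (\<lambda>x. c * f x)"

lemma fsc_app[simp]: "fsc c f x = c * f x"
  by (simp add: fsc_def)

interpretation fvs: vector_space "fsc :: 'k::field \<Rightarrow> ('i \<Rightarrow> 'k) \<Rightarrow> 'i \<Rightarrow> 'k"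
  by unfold_locales (auto simp: fun_eq_iff algebra_simps fsc_def)

definition kc :: "nat set \<Rightarrow> nat set \<Rightarrow> 'k::field" where
  "kc F G = (if \<exists>j\<in>F. G = F - {j}
      then (let j = (THE j. j \<in> F \<and> G = F - {j}) in (-1) ^ card {l\<in>F. l < j}) else 0)"

definition sg :: "nat set \<Rightarrow> nat \<Rightarrow> 'k::field" where
  "sg H j = (-1) ^ card {l\<in>H. l < j}"

lemma kos_coeff_kc: "kos_coeff F G = kc (set F) (set G)"
  unfolding kos_coeff_def kc_def by simp

lemma kc_remove:
  assumes "j \<in> F" shows "kc F (F - {j}) = sg F j"
proof -
  have "(THE j'. j' \<in> F \<and> F - {j} = F - {j'}) = j"
  proof (rule the_equality)
    show "j \<in> F \<and> F - {j} = F - {j}" using assms by simp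
    fix j' assume "j' \<in> F \<and> F - {j} = F - {j'}"
    then show "j' = j" by blast
  qed
  then show ?thesis using assms unfolding kc_def sg_def by auto
qed

lemma kc_nz: "kc F G \<noteq> 0 \<Longrightarrow> \<exists>j\<in>F. G = F - {j}"
  unfolding kc_def by (auto split: if_splits)

lemma kc_insert: "j \<notin> H \<Longrightarrow> kc (insert j H) H = sg H j"
proof -
  assume j: "j \<notin> H"
  have "kc (insert j H) (insert j H - {j}) = sg (insert j H) j" by (rule kc_remove) simp
  moreover have "insert j H - {j} = H" using j by auto
  moreover have "{l \<in> insert j H. l < j} = {l\<in>H. l < j}" by auto
  ultimately show ?thesis unfolding sg_def by simp
qed

lemma card_lt_insert:
  assumes "finite H" "j \<notin> H"
  shows "card {l \<in> insert j H. l < k} = card {l\<in>H. l < k} + (if j < k then 1 else 0)"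
proof (cases "j < k")
  case True
  then have "{l \<in> insert j H. l < k} = insert j {l\<in>H. l < k}" by auto
  then show ?thesis using assms True by simp
next
  case False
  then have "{l \<in> insert j H. l < k} = {l\<in>H. l < k}" by auto
  then show ?thesis using False by simp
qed

lemma sum_app: "(sum f A) x = (\<Sum>i\<in>A. f i x)"
  by (induct A rule: infinite_finite_induct) auto

lemma SK:
  fixes g :: "nat set \<Rightarrow> 'k::field"
  assumes fX: "finite X" and HX: "H \<subseteq> X"
  shows "(\<Sum>F\<in>Pow X. g F * kc F H) = (\<Sum>j\<in>X - H. g (insert j H) * sg H j)"
proof -
  have "(\<Sum>F\<in>Pow X. g F * kc F H) = (\<Sum>F\<in>(\<lambda>j. insert j H) ` (X - H). g F * kc F H)"
  proof (rule sum.mono_neutral_right)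
    show "finite (Pow X)" using fX by simp
    show "(\<lambda>j. insert j H) ` (X - H) \<subseteq> Pow X" using HX by auto
    show "\<forall>F\<in>Pow X - (\<lambda>j. insert j H) ` (X - H). g F * kc F H = 0"
    proof
      fix F assume F: "F \<in> Pow X - (\<lambda>j. insert j H) ` (X - H)"
      show "g F * kc F H = 0"
      proof (rule ccontr)
        assume "g F * kc F H \<noteq> 0"
        then have "(kc F H :: 'k) \<noteq> 0" by auto
        then obtain j where "j \<in> F" "H = F - {j}" using kc_nz by blast
        then have "F = insert j H" "j \<notin> H" "j \<in> X" using F by auto
        then show False using F by auto
      qed
    qed
  qed
  also have "\<dots> = (\<Sum>j\<in>X - H. g (insert j H) * kc (insert j H) H)"
    by (rule sum.reindex_cong[where l = "\<lambda>j. insert j H"]) (auto simp: inj_on_def)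
  also have "\<dots> = (\<Sum>j\<in>X - H. g (insert j H) * sg H j)"
    by (rule sum.cong) (auto simp: kc_insert)
  finally show ?thesis .
qed

lemma SK0:
  fixes g :: "nat set \<Rightarrow> 'k::field"
  assumes "\<not> H \<subseteq> X"
  shows "(\<Sum>F\<in>Pow X. g F * kc F H) = 0"
proof (rule sum.neutral, rule ballI)
  fix F assume F: "F \<in> Pow X"
  show "g F * kc F H = 0"
  proof (rule ccontr)
    assume "g F * kc F H \<noteq> 0"
    then have "(kc F H :: 'k) \<noteq> 0" by auto
    then obtain j where "j \<in> F" "H = F - {j}" using kc_nz by blast
    then show False using F assms by auto
  qed
qed

definition ee :: "nat set \<Rightarrow> nat set \<Rightarrow> 'k::field" where
  "ee F = (\<lambda>G. if G = F then 1 else 0)"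

definition dd :: "nat set \<Rightarrow> (nat set \<Rightarrow> 'k::field) \<Rightarrow> nat set \<Rightarrow> 'k" where
  "dd X f = (\<lambda>H. \<Sum>F\<in>Pow X. f F * kc F H)"

lemma dd_ee: "finite X \<Longrightarrow> F \<subseteq> X \<Longrightarrow> dd X (ee F) = kc F"
  unfolding dd_def ee_def
  by (rule ext) (simp add: if_distrib if_distribR sum.delta' cong: if_cong)

lemma dd_add: "dd X (f + g) = dd X f + dd X g"
  unfolding dd_def by (rule ext) (simp add: sum.distrib distrib_right)

lemma dd_scale: "dd X (\<lambda>x. c * f x) = (\<lambda>x. c * dd X f x)"
  unfolding dd_def by (rule ext) (simp add: sum_distrib_left mult.assoc)

lemma neg1_sq: "(-1::'k::ring_1) ^ a * (-1) ^ a = 1"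
  by (induct a) auto

lemma ddd:
  assumes fX: "finite X" and FX: "F \<subseteq> X"
  shows "dd X (kc F :: nat set \<Rightarrow> 'k::field) = 0"
proof (rule ext)
  fix H
  show "dd X (kc F :: nat set \<Rightarrow> 'k) H = 0 H"
  proof (cases "H \<subseteq> X")
    case False then show ?thesis unfolding dd_def using SK0[OF False, where g = "kc F"] by simp
  next
    case HX: True
    have fF: "finite F" using fX FX finite_subset by blast
    have fH: "finite H" using fX HX finite_subset by blast
    have eq: "dd X (kc F :: nat set \<Rightarrow> 'k) H = (\<Sum>j\<in>X - H. kc F (insert j H) * sg H j)"
      unfolding dd_def using SK[OF fX HX, where g = "kc F"] by simp
    show ?thesis
    proof (cases "\<exists>j\<in>X - H. kc F (insert j H) \<noteq> (0::'k)")
      case False then show ?thesis using eq by simp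
    next
      case True
      then obtain j where j: "j \<in> X - H" "kc F (insert j H) \<noteq> (0::'k)" by auto
      then obtain j' where j': "j' \<in> F" "insert j H = F - {j'}" using kc_nz by blast
      have jj: "j \<noteq> j'" "j \<notin> H" "j' \<notin> H" "j \<in> F" using j j' by blast+
      have Feq: "F = insert j' (insert j H)" using j' by auto
      have sub: "{j, j'} \<subseteq> X - H" using j j' FX jj by auto
      have "dd X (kc F :: nat set \<Rightarrow> 'k) H = (\<Sum>i\<in>{j, j'}. kc F (insert i H) * sg H i)"
        unfolding eq
      proof (rule sum.mono_neutral_right[symmetric, OF _ sub, symmetric])
        show "finite (X - H)" using fX by simp
        show "\<forall>i\<in>X - H - {j, j'}. kc F (insert i H) * sg H i = (0::'k)"
        proof
          fix i assume i: "i \<in> X - H - {j, j'}"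
          show "kc F (insert i H) * sg H i = (0::'k)"
          proof (rule ccontr)
            assume "kc F (insert i H) * sg H i \<noteq> (0::'k)"
            then have "kc F (insert i H) \<noteq> (0::'k)" by auto
            then obtain i' where "insert i H = F - {i'}" using kc_nz by blast
            then have "i \<in> F" by auto
            then show False using i Feq by auto
          qed
        qed
      qed
      also have "\<dots> = kc F (insert j H) * sg H j + kc F (insert j' H) * sg H j'"
        using jj by simp
      also have "kc F (insert j H) = (sg F j' :: 'k)" using j' kc_remove by metis
      also have "insert j' H = F - {j}" using Feq jj by auto
      also have "kc F (F - {j}) = (sg F j :: 'k)" using jj kc_remove by metis
      finally have dd2: "dd X (kc F :: nat set \<Rightarrow> 'k) H = sg F j' * sg H j + sg F j * sg H j'" .
      have c1: "card {l \<in> F. l < j'} = card {l\<in>H. l < j'} + (if j < j' then 1 else 0)"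
        unfolding Feq using card_lt_insert[of "insert j H" j' j'] card_lt_insert[of H j j'] fH jj by simp
      have c2: "card {l \<in> F. l < j} = card {l\<in>H. l < j} + (if j' < j then 1 else 0)"
        unfolding Feq using card_lt_insert[of "insert j H" j' j] card_lt_insert[of H j j] fH jj by simp
      show ?thesis
      proof (cases "j < j'")
        case True
        then have "\<not> j' < j" by simp
        then show ?thesis using dd2 c1 c2 True unfolding sg_def by (simp add: power_add)
      next
        case False
        then have "j' < j" using jj by simp
        then show ?thesis using dd2 c1 c2 False unfolding sg_def by (simp add: power_add)
      qed
    qed
  qed
qed

definition hs :: "nat \<Rightarrow> (nat set \<Rightarrow> 'k::field) \<Rightarrow> nat set \<Rightarrow> 'k" where
  "hs p f = (\<lambda>G. if p \<in> G then (-1) ^ (card G - 1) * f (G - {p}) else 0)"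

lemma homotopy:
  assumes fX: "finite X" and pX: "p \<in> X"
    and supp: "\<And>F. f F \<noteq> 0 \<Longrightarrow> F \<subseteq> X \<and> (\<forall>x\<in>F. x \<le> p)"
  shows "dd X (hs p f) H + hs p (dd X f) H = (f H :: 'k::field)"
proof (cases "H \<subseteq> X")
  case False
  have "dd X (hs p f) H = 0" unfolding dd_def using SK0[OF False, where g = "hs p f"] by simp
  moreover have "hs p (dd X f) H = 0"
  proof (cases "p \<in> H")
    case True
    then have "\<not> H - {p} \<subseteq> X" using False pX by auto
    then show ?thesis unfolding hs_def dd_def using SK0[where g = f] by simp
  qed (simp add: hs_def)
  moreover have "f H = 0" using supp False by blast
  ultimately show ?thesis by simp
next
  case HX: True
  have fH: "finite H" using fX HX finite_subset by blast
  have e1: "dd X (hs p f) H = (\<Sum>j\<in>X - H. hs p f (insert j H) * sg H j)"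
    unfolding dd_def using SK[OF fX HX, where g = "hs p f"] by simp
  show ?thesis
  proof (cases "p \<in> H")
    case False
    have "(\<Sum>j\<in>X - H. hs p f (insert j H) * sg H j) = (\<Sum>j\<in>{p}. hs p f (insert j H) * sg H j)"
      by (rule sum.mono_neutral_right) (use fX pX False in \<open>auto simp: hs_def\<close>)
    also have "\<dots> = (-1) ^ card H * f H * sg H p"
      using False fH by (simp add: hs_def)
    finally have d1: "dd X (hs p f) H = (-1) ^ card H * f H * sg H p" using e1 by simp
    have "hs p (dd X f) H = 0" using False by (simp add: hs_def)
    moreover have "(-1) ^ card H * f H * sg H p = f H"
    proof (cases "f H = 0")
      case False
      then have "\<forall>x\<in>H. x \<le> p" using supp by blast
      then have "{l\<in>H. l < p} = H" using \<open>p \<notin> H\<close> by (auto simp: le_less)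
      then show ?thesis unfolding sg_def by (simp add: mult.commute mult.left_commute neg1_sq)
    qed simp
    ultimately show ?thesis using d1 by simp
  next
    case True
    define H' where "H' = H - {p}"
    have H'X: "H' \<subseteq> X" using HX H'_def by auto
    have "card H > 0" using True fH card_gt_0_iff by blast
    then have cH: "card H = Suc (card H')" using True fH H'_def by (simp add: card_Diff_singleton)
    have HH: "insert p H' = H" using True H'_def by auto
    have pH': "p \<notin> H'" using H'_def by simp
    have XH': "X - H' = insert p (X - H)" using True pX H'_def by auto
    let ?S = "\<Sum>j\<in>X - H. f (insert j H') * sg H j"
    have d1: "dd X (hs p f) H = (-1) ^ Suc (card H') * ?S"
    proof -
      have "dd X (hs p f) H = (\<Sum>j\<in>X - H. (-1) ^ Suc (card H') * (f (insert j H') * sg H j))"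
        unfolding e1
      proof (rule sum.cong[OF refl])
        fix j assume j: "j \<in> X - H"
        then have c1: "card (insert j H) - 1 = Suc (card H')" using fH cH by simp
        have c2: "insert j H - {p} = insert j H'" using j True H'_def by auto
        have "hs p f (insert j H) = (-1) ^ Suc (card H') * f (insert j H')"
          unfolding hs_def c1 c2 using True by simp
        then show "hs p f (insert j H) * sg H j = (-1) ^ Suc (card H') * (f (insert j H') * sg H j)"
          by (simp only: mult.assoc)
      qed
      then show ?thesis by (simp add: sum_distrib_left sum_negf)
    qed
    have "dd X f H' = (\<Sum>j\<in>X - H'. f (insert j H') * sg H' j)"
      unfolding dd_def using SK[OF fX H'X, where g = f] by simp
    also have "\<dots> = f H * sg H' p + (\<Sum>j\<in>X - H. f (insert j H') * sg H' j)"
      unfolding XH' using fX True by (subst sum.insert) (auto simp: HH)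
    also have "(\<Sum>j\<in>X - H. f (insert j H') * sg H' j) = ?S"
    proof (rule sum.cong[OF refl])
      fix j assume j: "j \<in> X - H"
      show "f (insert j H') * sg H' j = f (insert j H') * sg H j"
      proof (cases "f (insert j H') = 0")
        case False
        then have "j \<le> p" using supp by blast
        moreover have "j \<noteq> p" using j True by auto
        ultimately have "{l\<in>H. l < j} = {l\<in>H'. l < j}" using H'_def by auto
        then show ?thesis unfolding sg_def by simp
      qed simp
    qed
    finally have d2: "hs p (dd X f) H = (-1) ^ card H' * (f H * sg H' p + ?S)"
      using True cH by (simp add: hs_def H'_def[symmetric])
    have last: "(-1) ^ card H' * (f H * sg H' p) = f H"
    proof (cases "f H = 0")
      case False
      then have "\<forall>x\<in>H. x \<le> p" using supp by blast
      then have "{l\<in>H'. l < p} = H'" using H'_def by (auto simp: le_less)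
      then show ?thesis unfolding sg_def by (simp add: mult.commute mult.left_commute neg1_sq)
    qed simp
    show ?thesis using d1 d2 last by (simp add: algebra_simps)
  qed
qed

lemma span_ee:
  assumes "finite A"
  shows "fvs.span (ee ` A) = {f :: nat set \<Rightarrow> 'k::field. \<forall>G. f G \<noteq> 0 \<longrightarrow> G \<in> A}"
proof
  let ?T = "{f :: nat set \<Rightarrow> 'k. \<forall>G. f G \<noteq> 0 \<longrightarrow> G \<in> A}"
  have "fvs.subspace ?T" unfolding fvs.subspace_def by (auto simp: fsc_def, metis add.left_neutral)
  moreover have "ee ` A \<subseteq> ?T" unfolding ee_def by (auto split: if_split_asm)
  ultimately show "fvs.span (ee ` A) \<subseteq> ?T" using fvs.span_minimal by blast
next
  show "{f :: nat set \<Rightarrow> 'k. \<forall>G. f G \<noteq> 0 \<longrightarrow> G \<in> A} \<subseteq> fvs.span (ee ` A)"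
  proof
    fix f :: "nat set \<Rightarrow> 'k" assume f: "f \<in> {f. \<forall>G. f G \<noteq> 0 \<longrightarrow> G \<in> A}"
    have "f = (\<Sum>F\<in>A. fsc (f F) (ee F))"
    proof (rule ext)
      fix G
      have "(\<Sum>F\<in>A. fsc (f F) (ee F)) G = (\<Sum>F\<in>A. f F * ee F G)" by (simp add: sum_app)
      also have "\<dots> = (if G \<in> A then f G else 0)"
        using assms unfolding ee_def by (simp add: if_distrib if_distribR sum.delta cong: if_cong)
      also have "\<dots> = f G" using f by auto
      finally show "f G = (\<Sum>F\<in>A. fsc (f F) (ee F)) G" by simp
    qed
    also have "\<dots> \<in> fvs.span (ee ` A)"
      by (intro fvs.span_sum fvs.span_scale fvs.span_base) auto
    finally show "f \<in> fvs.span (ee ` A)" .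
  qed
qed

lemma dim_span_ee:
  assumes "finite A"
  shows "fvs.dim (fvs.span (ee ` A) :: (nat set \<Rightarrow> 'k::field) set) = card A"
proof -
  have inj: "inj_on (ee :: nat set \<Rightarrow> nat set \<Rightarrow> 'k) A"
    unfolding inj_on_def ee_def by (metis zero_neq_one)
  have "fvs.independent (ee ` A :: (nat set \<Rightarrow> 'k) set)"
  proof (rule fvs.indep_intro_fin)
    show "finite (ee ` A)" using assms by simp
    fix a :: "(nat set \<Rightarrow> 'k) \<Rightarrow> 'k" and v :: "nat set \<Rightarrow> 'k"
    assume s: "(\<Sum>v\<in>ee ` A. fsc (a v) v) = 0" and v: "v \<in> ee ` A"
    then obtain F where F: "F \<in> A" "v = ee F" by auto
    have "(\<Sum>v\<in>ee ` A. fsc (a v) v) F = (\<Sum>G\<in>A. a (ee G) * ee G F)"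
      using sum.reindex[OF inj, of "\<lambda>v::nat set \<Rightarrow> 'k. a v * v F"] by (simp add: sum_app)
    also have "\<dots> = a (ee F)" using assms F unfolding ee_def
      by (simp add: if_distrib if_distribR sum.delta eq_commute[of F] cong: if_cong)
    finally show "a v = 0" using s F by simp
  qed
  then have "fvs.dim (ee ` A :: (nat set \<Rightarrow> 'k) set) = card (ee ` A :: (nat set \<Rightarrow> 'k) set)" by (rule fvs.dim_eq_card_independent)
  then show ?thesis using card_image[OF inj] by simp
qed


lemma (in vec_space) rank_bridge:
  fixes Rl :: "'r list" and Cl :: "'c list" and \<kappa> :: "'r \<Rightarrow> nat set" and f :: "'c \<Rightarrow> nat set \<Rightarrow> 'a"
  assumes N: "n = length Rl" and inj: "inj_on \<kappa> (set Rl)"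
    and supp: "\<And>c x. c \<in> set Cl \<Longrightarrow> f c x \<noteq> 0 \<Longrightarrow> x \<in> \<kappa> ` set Rl"
  shows "rank (mat n (length Cl) (\<lambda>(r,c). f (Cl!c) (\<kappa> (Rl!r)))) = fvs.dim (f ` set Cl)"
proof -
  define M where "M = mat n (length Cl) (\<lambda>(r,c). f (Cl!c) (\<kappa> (Rl!r)))"
  define \<phi> where "\<phi> g = vec n (\<lambda>r. g (\<kappa> (Rl!r)))" for g :: "nat set \<Rightarrow> 'a"
  define W where "W = {g :: nat set \<Rightarrow> 'a. \<forall>x. g x \<noteq> 0 \<longrightarrow> x \<in> \<kappa> ` set Rl}"
  have \<phi>idx: "\<And>g r. r < n \<Longrightarrow> \<phi> g $ r = g (\<kappa> (Rl!r))" unfolding \<phi>_def by simp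
  have \<phi>car: "\<And>g. \<phi> g \<in> carrier_vec n" unfolding \<phi>_def by simp
  have \<phi>inj: "inj_on \<phi> W"
  proof (rule inj_onI)
    fix g h assume g: "g \<in> W" and h: "h \<in> W" and e: "\<phi> g = \<phi> h"
    show "g = h"
    proof (rule ext)
      fix x show "g x = h x"
      proof (cases "x \<in> \<kappa> ` set Rl")
        case True
        then obtain r where r: "r < n" "x = \<kappa> (Rl!r)" using N by (auto simp: in_set_conv_nth)
        then show ?thesis using \<phi>idx[of r g] \<phi>idx[of r h] e by simp
      next
        case False
        have "g x = 0" "h x = 0" using g h False unfolding W_def by blast+
        then show ?thesis by simp
      qed
    qed
  qed
  have fW: "f ` set Cl \<subseteq> W" using supp unfolding W_def by auto
  have Mc: "M \<in> carrier_mat n (length Cl)" unfolding M_def by simp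
  have colsM: "set (cols M) = \<phi> ` f ` set Cl"
  proof -
    have "set (cols M) = col M ` {0..<length Cl}" unfolding cols_def M_def by simp
    also have "\<dots> = (\<lambda>j. \<phi> (f (Cl!j))) ` {0..<length Cl}"
    proof (rule image_cong[OF refl])
      fix j assume j: "j \<in> {0..<length Cl}"
      show "col M j = \<phi> (f (Cl!j))"
        by (rule eq_vecI) (use j in \<open>simp_all add: M_def \<phi>_def\<close>)
    qed
    also have "\<dots> = \<phi> ` f ` set Cl"
    proof
      show "(\<lambda>j. \<phi> (f (Cl!j))) ` {0..<length Cl} \<subseteq> \<phi> ` f ` set Cl" by auto
      show "\<phi> ` f ` set Cl \<subseteq> (\<lambda>j. \<phi> (f (Cl!j))) ` {0..<length Cl}"
      proof
        fix y assume "y \<in> \<phi> ` f ` set Cl"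
        then obtain c where c: "c \<in> set Cl" "y = \<phi> (f c)" by auto
        then obtain j where "j < length Cl" "c = Cl!j" by (auto simp: in_set_conv_nth)
        then show "y \<in> (\<lambda>j. \<phi> (f (Cl!j))) ` {0..<length Cl}" using c by auto
      qed
    qed
    finally show ?thesis .
  qed
  obtain S where S: "S \<subseteq> f ` set Cl" "fvs.independent S" "f ` set Cl \<subseteq> fvs.span S"
      "card S = fvs.dim (f ` set Cl)"
    using fvs.basis_exists by blast
  have fS: "finite S" using S(1) finite_subset by blast
  have SW: "S \<subseteq> W" using S(1) fW by blast
  have injS: "inj_on \<phi> S" using \<phi>inj SW inj_on_subset by blast
  have \<phi>S: "\<phi> ` S \<subseteq> carrier_vec n" using \<phi>car by auto
  have indep: "lin_indpt (\<phi> ` S)"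
  proof
    assume "lin_dep (\<phi> ` S)"
    then obtain A a v where A: "finite A" "A \<subseteq> \<phi> ` S" "lincomb a A = 0\<^sub>v n" "v \<in> A" "a v \<noteq> 0"
      unfolding lin_dep_def by auto
    define A0 where "A0 = {g\<in>S. \<phi> g \<in> A}"
    have A0S: "A0 \<subseteq> S" unfolding A0_def by auto
    have fA0: "finite A0" using fS A0S finite_subset by blast
    have AA0: "A = \<phi> ` A0" using A(2) unfolding A0_def by auto
    have injA0: "inj_on \<phi> A0" using injS A0S inj_on_subset by blast
    have Ac: "A \<subseteq> carrier_vec n" using A(2) \<phi>S by auto
    have "(\<Sum>g\<in>A0. fsc (a (\<phi> g)) g) = 0"
    proof (rule ext)
      fix x
      have "(\<Sum>g\<in>A0. fsc (a (\<phi> g)) g) x = (\<Sum>g\<in>A0. a (\<phi> g) * g x)" by (simp add: sum_app)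
      also have "\<dots> = 0"
      proof (cases "x \<in> \<kappa> ` set Rl")
        case True
        then obtain r where r: "r < n" "x = \<kappa> (Rl!r)" using N by (auto simp: in_set_conv_nth)
        have "(\<Sum>g\<in>A0. a (\<phi> g) * g x) = (\<Sum>g\<in>A0. a (\<phi> g) * \<phi> g $ r)" using \<phi>idx r by simp
        also have "\<dots> = (\<Sum>w\<in>A. a w * w $ r)" unfolding AA0 using sum.reindex[OF injA0, of "\<lambda>w. a w * w $ r"] by simp
        also have "\<dots> = lincomb a A $ r" using lincomb_index[OF r(1) Ac] by simp
        also have "\<dots> = 0" using A(3) r(1) by simp
        finally show ?thesis .
      next
        case False
        then have "\<And>g. g \<in> A0 \<Longrightarrow> g x = 0" using A0S SW unfolding W_def by auto
        then show ?thesis by simp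
      qed
      finally show "(\<Sum>g\<in>A0. fsc (a (\<phi> g)) g) x = 0 x" by simp
    qed
    then have "\<And>g. g \<in> A0 \<Longrightarrow> a (\<phi> g) = 0"
      using fvs.independentD[OF S(2) fA0 A0S, where u = "\<lambda>g. a (\<phi> g)"] by blast
    moreover obtain g0 where "g0 \<in> A0" "v = \<phi> g0" using A(4) AA0 by auto
    ultimately show False using A(5) by simp
  qed
  have maxi: "maximal (\<phi> ` S) (\<lambda>T. T \<subseteq> set (cols M) \<and> lin_indpt T)"
    unfolding maximal_def
  proof (intro conjI allI impI)
    show "\<phi> ` S \<subseteq> set (cols M)" using colsM S(1) by auto
    show "lin_indpt (\<phi> ` S)" by (rule indep)
    fix B assume B: "\<phi> ` S \<subseteq> B \<and> B \<subseteq> set (cols M) \<and> lin_indpt B"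
    show "B = \<phi> ` S"
    proof (rule ccontr)
      assume "B \<noteq> \<phi> ` S"
      then obtain w where w: "w \<in> B" "w \<notin> \<phi> ` S" using B by auto
      have "w \<in> \<phi> ` (f ` set Cl)" using B colsM w(1) by (metis subsetD)
      then obtain g where g: "g \<in> f ` set Cl" "w = \<phi> g" by blast
      then have "g \<in> fvs.span S" using S(3) by auto
      then obtain u where u: "g = (\<Sum>h\<in>S. fsc (u h) h)" using fvs.span_finite[OF fS] by auto
      define b where "b w' = u (the_inv_into S \<phi> w')" for w'
      have wspan: "w \<in> span (\<phi> ` S)"
      proof (rule in_spanI)
        show "finite (\<phi> ` S)" using fS by simp
        show "\<phi> ` S \<subseteq> \<phi> ` S" by simp
        show "w = lincomb b (\<phi> ` S)"
        proof (rule eq_vecI)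
          have lc: "lincomb b (\<phi> ` S) \<in> carrier_vec n" using lincomb_closed \<phi>S by auto
          show "dim_vec w = dim_vec (lincomb b (\<phi> ` S))" using lc g(2) \<phi>car by (simp add: carrier_vecD)
          fix r assume "r < dim_vec (lincomb b (\<phi> ` S))"
          then have r: "r < n" using lc by (simp add: carrier_vecD)
          have "lincomb b (\<phi> ` S) $ r = (\<Sum>w'\<in>\<phi> ` S. b w' * w' $ r)" using lincomb_index[OF r \<phi>S] .
          also have "\<dots> = (\<Sum>h\<in>S. b (\<phi> h) * \<phi> h $ r)" using sum.reindex[OF injS, of "\<lambda>w'. b w' * w' $ r"] by simp
          also have "\<dots> = (\<Sum>h\<in>S. u h * h (\<kappa> (Rl!r)))"
            by (rule sum.cong[OF refl]) (simp add: b_def the_inv_into_f_f[OF injS] \<phi>idx[OF r])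
          also have "\<dots> = g (\<kappa> (Rl!r))" unfolding u by (simp add: sum_app)
          also have "\<dots> = w $ r" using g(2) \<phi>idx[OF r] by simp
          finally show "w $ r = lincomb b (\<phi> ` S) $ r" by simp
        qed
      qed
      have "lin_dep (\<phi> ` S \<union> {w})"
        using lin_dep_iff_in_span[OF \<phi>S indep _ w(2)] wspan g(2) \<phi>car by blast
      moreover have "\<phi> ` S \<union> {w} \<subseteq> B" using B w by auto
      ultimately have "lin_dep B" using supset_ld_is_ld by blast
      then show False using B by blast
    qed
  qed
  have "rank M = card (\<phi> ` S)" by (rule rank_card_indpt[OF Mc maxi])
  also have "\<dots> = card S" using card_image[OF injS] .
  finally show ?thesis using S(4) unfolding M_def by simp
qed


context vector_space begin
lemma dim_mono_fin:
  assumes "finite W" "T \<subseteq> span W" "S \<subseteq> T"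
  shows "dim S \<le> dim T"
proof -
  obtain B where B: "B \<subseteq> T" "independent B" "T \<subseteq> span B" "card B = dim T"
    using basis_exists by blast
  have "finite B" using independent_span_bound[OF assms(1) B(2)] B(1) assms(2) by blast
  moreover have "S \<subseteq> span B" using assms(3) B(3) by blast
  ultimately show ?thesis using dim_le_card B(4) by metis
qed
end

lemma fsc_lam: "fsc = (\<lambda>a b c. a * b c)"
  by (intro ext) (simp add: fsc_def)

lemma int_diff3: "b + c \<le> (a::nat) \<Longrightarrow> int (a - b - c) = int a - int b - int c"
  by linarith

definition okset :: "(nat \<Rightarrow> nat) set \<Rightarrow> (nat \<Rightarrow> nat) \<Rightarrow> nat set \<Rightarrow> bool" where
  "okset I \<alpha> F \<longleftrightarrow> (\<forall>l\<in>F. 1 \<le> \<alpha> l) \<and> (\<lambda>l. if l \<in> F then \<alpha> l - 1 else \<alpha> l) \<in> I"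

definition Dk :: "nat \<Rightarrow> (nat \<Rightarrow> nat) set \<Rightarrow> (nat \<Rightarrow> nat) \<Rightarrow> nat \<Rightarrow> nat set set" where
  "Dk n I \<alpha> i = {F. F \<subseteq> {0..<n} \<and> card F = i \<and> okset I \<alpha> F}"

lemma Dk_fin: "finite (Dk n I \<alpha> i)"
proof -
  have "Dk n I \<alpha> i \<subseteq> Pow {0..<n}" unfolding Dk_def by auto
  then show ?thesis using finite_subset by blast
qed

lemma kos_ok_set: "kos_ok I \<alpha> F = okset I \<alpha> (set F)"
  unfolding kos_ok_def okset_def by simp

lemma KB_set: "set ` set (kos_basis n I \<alpha> i) = Dk n I \<alpha> i"
proof
  show "set ` set (kos_basis n I \<alpha> i) \<subseteq> Dk n I \<alpha> i"
  proof
    fix F assume "F \<in> set ` set (kos_basis n I \<alpha> i)"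
    then obtain xs where xs: "xs \<in> set (subseqs [0..<n])" "length xs = i" "kos_ok I \<alpha> xs" "F = set xs"
      unfolding kos_basis_def by auto
    have "distinct xs" using subseqs_distinctD[OF xs(1)] by simp
    then have "card F = i" using xs distinct_card by metis
    moreover have "F \<subseteq> {0..<n}" using xs(1,4) subseqs_powset[of "[0..<n]"] by auto
    ultimately show "F \<in> Dk n I \<alpha> i" using xs unfolding Dk_def kos_ok_set by auto
  qed
next
  show "Dk n I \<alpha> i \<subseteq> set ` set (kos_basis n I \<alpha> i)"
  proof
    fix F assume F: "F \<in> Dk n I \<alpha> i"
    then have "F \<in> Pow (set [0..<n])" unfolding Dk_def by auto
    then obtain xs where xs: "xs \<in> set (subseqs [0..<n])" "F = set xs"
      using subseqs_powset[of "[0..<n]"] by (metis imageE)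
    have "distinct xs" using subseqs_distinctD[OF xs(1)] by simp
    then have "length xs = i" using F xs distinct_card unfolding Dk_def by fastforce
    then show "F \<in> set ` set (kos_basis n I \<alpha> i)"
      using F xs unfolding kos_basis_def Dk_def kos_ok_set by auto
  qed
qed

lemma KB_dist: "distinct (map set (kos_basis n I \<alpha> i))"
  unfolding kos_basis_def
  by (rule distinct_map_filter) (rule distinct_set_subseqs, simp)

lemma KB_len: "length (kos_basis n I \<alpha> i) = card (Dk n I \<alpha> i)"
proof -
  have "length (kos_basis n I \<alpha> i) = length (map set (kos_basis n I \<alpha> i))" by simp
  also have "\<dots> = card (set (map set (kos_basis n I \<alpha> i)))" using KB_dist distinct_card by metis
  finally show ?thesis using KB_set by simp
qed

lemma KB_inj: "inj_on set (set (kos_basis n I \<alpha> i))"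
  using KB_dist distinct_map by blast

lemma Dk_down:
  assumes mi: "monomial_ideal n I" and F: "F \<in> Dk n I \<alpha> i" and j: "j \<in> F"
  shows "F - {j} \<in> Dk n I \<alpha> (i - 1)"
proof -
  have Fn: "F \<subseteq> {0..<n}" and cF: "card F = i" and ok: "okset I \<alpha> F" using F unfolding Dk_def by auto
  have fF: "finite F" using Fn finite_subset by blast
  let ?u = "\<lambda>l. if l \<in> F then \<alpha> l - 1 else \<alpha> l"
  let ?v = "\<lambda>l. if l \<in> F - {j} then \<alpha> l - 1 else \<alpha> l"
  have u: "?u \<in> I" using ok unfolding okset_def by auto
  have um: "?u \<in> mons n" using u mi unfolding monomial_ideal_def by auto
  have "?v \<in> mons n"
    unfolding mons_def
  proof (intro CollectI allI impI)
    fix l assume "n \<le> l"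
    then have "l \<notin> F" using Fn by auto
    then show "?v l = 0" using um \<open>n \<le> l\<close> unfolding mons_def by auto
  qed
  moreover have "mdvd ?u ?v" unfolding mdvd_def by auto
  ultimately have "?v \<in> I" using u mi unfolding monomial_ideal_def by blast
  then have "okset I \<alpha> (F - {j})" using ok unfolding okset_def by auto
  moreover have "card (F - {j}) = i - 1" using cF j fF by simp
  ultimately show ?thesis using Fn unfolding Dk_def by auto
qed

lemma kc_supp:
  assumes mi: "monomial_ideal n I" and F: "F \<in> Dk n I \<alpha> i" and nz: "(kc F G :: 'k::field) \<noteq> 0"
  shows "G \<in> Dk n I \<alpha> (i - 1)"
proof -
  obtain j where "j \<in> F" "G = F - {j}" using kc_nz[OF nz] by blast
  then show ?thesis using Dk_down[OF mi F] by simp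
qed

lemma kc_empty: "kc {} = (\<lambda>G. 0)"
  unfolding kc_def by (rule ext) simp

lemma rank_eq:
  assumes mi: "monomial_ideal n I"
  shows "kos_rank TYPE('k::field) n I \<alpha> i = fvs.dim (kc ` Dk n I \<alpha> i :: (nat set \<Rightarrow> 'k) set)"
proof (cases "i = 0")
  case True
  have "kc ` Dk n I \<alpha> i \<subseteq> fvs.span ({} :: (nat set \<Rightarrow> 'k) set)"
  proof
    fix v :: "nat set \<Rightarrow> 'k" assume "v \<in> kc ` Dk n I \<alpha> i"
    then obtain F where "F \<in> Dk n I \<alpha> i" "v = kc F" by auto
    moreover have "finite F" using \<open>F \<in> Dk n I \<alpha> i\<close> unfolding Dk_def using finite_subset by blast
    ultimately have "v = kc {}" using True unfolding Dk_def by auto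
    then show "v \<in> fvs.span {}" using kc_empty by (simp add: zero_fun_def)
  qed
  then have "fvs.dim (kc ` Dk n I \<alpha> i :: (nat set \<Rightarrow> 'k) set) \<le> card ({} :: (nat set \<Rightarrow> 'k) set)"
    using fvs.dim_le_card by blast
  then show ?thesis using True unfolding kos_rank_def by simp
next
  case False
  let ?R = "kos_basis n I \<alpha> (i - 1)" and ?C = "kos_basis n I \<alpha> i"
  have "kos_rank TYPE('k) n I \<alpha> i = vec_space.rank (length ?R)
      (mat (length ?R) (length ?C) (\<lambda>(r, c). (\<lambda>c. kc (set c)) (?C ! c) (set (?R ! r)) :: 'k))"
    using False unfolding kos_rank_def kos_mat_def Let_def kos_coeff_kc by simp
  also have "\<dots> = fvs.dim ((\<lambda>c. kc (set c)) ` set ?C :: (nat set \<Rightarrow> 'k) set)"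
  proof (rule vec_space.rank_bridge)
    show "length ?R = length ?R" ..
    show "inj_on set (set ?R)" by (rule KB_inj)
    fix c x assume c: "c \<in> set ?C" and nz: "(kc (set c) x :: 'k) \<noteq> 0"
    have "set c \<in> Dk n I \<alpha> i" using c KB_set by blast
    then have "x \<in> Dk n I \<alpha> (i - 1)" using kc_supp[OF mi _ nz] by blast
    then show "x \<in> set ` set ?R" using KB_set by blast
  qed
  also have "(\<lambda>c. kc (set c)) ` set ?C = kc ` (set ` set ?C)" by (simp add: image_image)
  also have "kc ` (set ` set ?C) = kc ` Dk n I \<alpha> i" using KB_set by metis
  finally show ?thesis .
qed

lemma dd_fsc: "dd X (fsc c f) = fsc c (dd X f)"
  unfolding fsc_def by (rule dd_scale)

lemma dd_hom: "module_hom fsc fsc (dd X :: (nat set \<Rightarrow> 'k::field) \<Rightarrow> _)"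
proof -
  have m: "Modules.module (fsc :: 'k \<Rightarrow> (nat set \<Rightarrow> 'k) \<Rightarrow> _)" by (rule fvs.module_axioms)
  show ?thesis
    unfolding module_hom_def module_hom_axioms_def
  proof (intro conjI m allI)
    fix b1 b2 :: "nat set \<Rightarrow> 'k" show "dd X (b1 + b2) = dd X b1 + dd X b2" by (rule dd_add)
  next
    fix r :: 'k and b :: "nat set \<Rightarrow> 'k" show "dd X (fsc r b) = fsc r (dd X b)"
      unfolding fsc_def by (rule dd_scale)
  qed
qed

lemma dd_span: "dd X ` fvs.span S = fvs.span (dd X ` S :: (nat set \<Rightarrow> 'k::field) set)"
  using module_hom.span_image[OF dd_hom] by metis

lemma dd_ker: "fvs.subspace {x :: nat set \<Rightarrow> 'k::field. dd X x = 0}"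
  using module_hom.subspace_kernel[OF dd_hom] by metis

lemma Bd_eq:
  "fvs.span (kc ` Dk n I \<alpha> i) = dd {0..<n} ` fvs.span (ee ` Dk n I \<alpha> i :: (nat set \<Rightarrow> 'k::field) set)"
proof -
  have "dd {0..<n} ` ee ` Dk n I \<alpha> i = (kc ` Dk n I \<alpha> i :: (nat set \<Rightarrow> 'k) set)"
  proof (rule image_image[THEN trans], rule image_cong[OF refl])
    fix F assume "F \<in> Dk n I \<alpha> i"
    then have "F \<subseteq> {0..<n}" unfolding Dk_def by auto
    then show "dd {0..<n} (ee F) = kc F" using dd_ee by blast
  qed
  then show ?thesis using dd_span by metis
qed

lemma Bd_sub_E:
  assumes mi: "monomial_ideal n I"
  shows "fvs.span (kc ` Dk n I \<alpha> (Suc i)) \<subseteq> fvs.span (ee ` Dk n I \<alpha> i :: (nat set \<Rightarrow> 'k::field) set)"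
proof (rule fvs.span_minimal)
  show "fvs.subspace (fvs.span (ee ` Dk n I \<alpha> i :: (nat set \<Rightarrow> 'k) set))" by simp
  show "kc ` Dk n I \<alpha> (Suc i) \<subseteq> fvs.span (ee ` Dk n I \<alpha> i :: (nat set \<Rightarrow> 'k) set)"
    unfolding span_ee[OF Dk_fin]
  proof (clarify)
    fix F G assume F: "F \<in> Dk n I \<alpha> (Suc i)" and "(kc F G :: 'k) \<noteq> 0"
    then show "G \<in> Dk n I \<alpha> i" using kc_supp[OF mi F] by simp
  qed
qed

lemma Bd_ker:
  assumes "x \<in> fvs.span (kc ` Dk n I \<alpha> i :: (nat set \<Rightarrow> 'k::field) set)"
  shows "dd {0..<n} x = 0"
proof -
  have "kc ` Dk n I \<alpha> i \<subseteq> {x :: nat set \<Rightarrow> 'k. dd {0..<n} x = 0}"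
  proof
    fix v :: "nat set \<Rightarrow> 'k" assume "v \<in> kc ` Dk n I \<alpha> i"
    then obtain F where "F \<in> Dk n I \<alpha> i" "v = kc F" by auto
    then show "v \<in> {x. dd {0..<n} x = 0}" using ddd[of "{0..<n}" F] unfolding Dk_def by auto
  qed
  then have "fvs.span (kc ` Dk n I \<alpha> i) \<subseteq> {x :: nat set \<Rightarrow> 'k. dd {0..<n} x = 0}"
    using fvs.span_minimal dd_ker by blast
  then show ?thesis using assms by blast
qed

lemma F4:
  assumes mi: "monomial_ideal n I"
  shows "fvs.dim (kc ` Dk n I \<alpha> i :: (nat set \<Rightarrow> 'k::field) set) + fvs.dim (kc ` Dk n I \<alpha> (Suc i) :: (nat set \<Rightarrow> 'k) set)
    \<le> card (Dk n I \<alpha> i)"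
proof -
  let ?E = "fvs.span (ee ` Dk n I \<alpha> i :: (nat set \<Rightarrow> 'k) set)"
  let ?f = "dd {0..<n} :: (nat set \<Rightarrow> 'k) \<Rightarrow> _"
  have rn: "fvs.dim (?f ` ?E) + fvs.dim (?E \<inter> {x. ?f x = 0}) \<le> fvs.dim ?E"
    by (rule fvs.rank_nullity_le) (simp_all add: Dk_fin dd_add dd_fsc)
  have "fvs.dim (kc ` Dk n I \<alpha> i :: (nat set \<Rightarrow> 'k) set) = fvs.dim (?f ` ?E)"
    using Bd_eq[of n I \<alpha> i] fvs.dim_span by metis
  moreover have "fvs.dim (kc ` Dk n I \<alpha> (Suc i) :: (nat set \<Rightarrow> 'k) set) \<le> fvs.dim (?E \<inter> {x. ?f x = 0})"
  proof -
    have "fvs.dim (kc ` Dk n I \<alpha> (Suc i) :: (nat set \<Rightarrow> 'k) set) = fvs.dim (fvs.span (kc ` Dk n I \<alpha> (Suc i)) :: (nat set \<Rightarrow> 'k) set)"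
      by simp
    also have "\<dots> \<le> fvs.dim (?E \<inter> {x. ?f x = 0})"
    proof (rule fvs.dim_mono_fin[where W = "ee ` Dk n I \<alpha> i"])
      show "finite (ee ` Dk n I \<alpha> i :: (nat set \<Rightarrow> 'k) set)" using Dk_fin by simp
      show "?E \<inter> {x. ?f x = 0} \<subseteq> ?E" by blast
      show "fvs.span (kc ` Dk n I \<alpha> (Suc i)) \<subseteq> ?E \<inter> {x. ?f x = 0}"
        using Bd_sub_E[OF mi] Bd_ker by blast
    qed
    finally show ?thesis .
  qed
  moreover have "fvs.dim ?E = card (Dk n I \<alpha> i)" using dim_span_ee[OF Dk_fin] .
  ultimately show ?thesis using rn by linarith
qed

lemma Dk_Un: "Dk n (I1 \<union> I2) \<alpha> i = Dk n I1 \<alpha> i \<union> Dk n I2 \<alpha> i"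
  unfolding Dk_def okset_def by auto

lemma Dk_Int: "Dk n (I1 \<inter> I2) \<alpha> i = Dk n I1 \<alpha> i \<inter> Dk n I2 \<alpha> i"
  unfolding Dk_def okset_def by auto

lemma mi_Un: "monomial_ideal n I1 \<Longrightarrow> monomial_ideal n I2 \<Longrightarrow> monomial_ideal n (I1 \<union> I2)"
  unfolding monomial_ideal_def by blast

lemma mi_Int: "monomial_ideal n I1 \<Longrightarrow> monomial_ideal n I2 \<Longrightarrow> monomial_ideal n (I1 \<inter> I2)"
  unfolding monomial_ideal_def by blast

lemma mb_int:
  assumes mi: "monomial_ideal n I"
  shows "int (multibetti TYPE('k::field) n I i \<alpha>) = int (card (Dk n I \<alpha> i))
     - int (fvs.dim (kc ` Dk n I \<alpha> i :: (nat set \<Rightarrow> 'k) set))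
     - int (fvs.dim (kc ` Dk n I \<alpha> (Suc i) :: (nat set \<Rightarrow> 'k) set))"
  unfolding multibetti_def KB_len rank_eq[OF mi] Suc_eq_plus1[symmetric]
  by (rule int_diff3[OF F4[OF mi, of \<alpha> i]])

lemma MV:
  fixes I1 I2 :: "(nat \<Rightarrow> nat) set"
  assumes mi1: "monomial_ideal n I1" and mi2: "monomial_ideal n I2"
    and V: "\<And>k. fvs.span (kc ` Dk n I1 \<alpha> k) \<inter> fvs.span (kc ` Dk n I2 \<alpha> k)
       \<subseteq> fvs.span (kc ` Dk n (I1 \<inter> I2) \<alpha> k :: (nat set \<Rightarrow> 'k::field) set)"
  shows "int (multibetti TYPE('k) n (I1 \<union> I2) i \<alpha>) = int (multibetti TYPE('k) n I1 i \<alpha>)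
     + int (multibetti TYPE('k) n I2 i \<alpha>) - int (multibetti TYPE('k) n (I1 \<inter> I2) i \<alpha>)"
proof -
  have rk: "fvs.dim (kc ` Dk n (I1 \<union> I2) \<alpha> k :: (nat set \<Rightarrow> 'k) set) + fvs.dim (kc ` Dk n (I1 \<inter> I2) \<alpha> k :: (nat set \<Rightarrow> 'k) set)
      = fvs.dim (kc ` Dk n I1 \<alpha> k :: (nat set \<Rightarrow> 'k) set) + fvs.dim (kc ` Dk n I2 \<alpha> k :: (nat set \<Rightarrow> 'k) set)" for k
  proof -
    let ?X = "kc ` Dk n I1 \<alpha> k :: (nat set \<Rightarrow> 'k) set" and ?Y = "kc ` Dk n I2 \<alpha> k :: (nat set \<Rightarrow> 'k) set"
    have eq: "fvs.span ?X \<inter> fvs.span ?Y = fvs.span (kc ` Dk n (I1 \<inter> I2) \<alpha> k)"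
    proof
      show "fvs.span ?X \<inter> fvs.span ?Y \<subseteq> fvs.span (kc ` Dk n (I1 \<inter> I2) \<alpha> k)" by (rule V)
      show "fvs.span (kc ` Dk n (I1 \<inter> I2) \<alpha> k) \<subseteq> fvs.span ?X \<inter> fvs.span ?Y"
        unfolding Dk_Int by (intro Int_greatest fvs.span_mono image_mono) auto
    qed
    have "fvs.dim (fvs.span (?X \<union> ?Y)) + fvs.dim (fvs.span ?X \<inter> fvs.span ?Y) = fvs.dim (fvs.span ?X) + fvs.dim (fvs.span ?Y)"
      by (rule fvs.dim_span_Un_Int) (simp_all add: Dk_fin)
    then show ?thesis unfolding eq Dk_Un image_Un by simp
  qed
  have ck: "card (Dk n (I1 \<union> I2) \<alpha> i) + card (Dk n (I1 \<inter> I2) \<alpha> i) = card (Dk n I1 \<alpha> i) + card (Dk n I2 \<alpha> i)"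
    unfolding Dk_Un Dk_Int using card_Un_Int[of "Dk n I1 \<alpha> i" "Dk n I2 \<alpha> i"] Dk_fin by simp
  show ?thesis
    unfolding mb_int[OF mi_Un[OF mi1 mi2]] mb_int[OF mi_Int[OF mi1 mi2]] mb_int[OF mi1] mb_int[OF mi2]
    using rk[of i] rk[of "Suc i"] ck by linarith
qed


lemma mdeg_minus:
  assumes Fn: "F \<subseteq> {0..<n}" and a: "\<forall>l\<in>F. 1 \<le> \<alpha> l"
  shows "mdeg n (\<lambda>l. if l \<in> F then \<alpha> l - 1 else \<alpha> l) + card F = mdeg n \<alpha>"
proof -
  have "(\<Sum>l<n. (if l \<in> F then 1 else 0::nat)) = sum (\<lambda>_. 1) ({..<n} \<inter> F)"
    by (rule sum.inter_restrict[symmetric]) simp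
  also have "{..<n} \<inter> F = F" using Fn by auto
  finally have c: "(\<Sum>l<n. (if l \<in> F then 1 else 0::nat)) = card F" by simp
  have "(\<Sum>l<n. (if l \<in> F then \<alpha> l - 1 else \<alpha> l) + (if l \<in> F then 1 else 0)) = (\<Sum>l<n. \<alpha> l)"
    by (rule sum.cong) (use a in auto)
  then show ?thesis unfolding mdeg_def sum.distrib c .
qed

lemma span_kc0:
  "fvs.span (kc ` Dk n I \<alpha> 0 :: (nat set \<Rightarrow> 'k::field) set) \<subseteq> {0}"
proof -
  have "kc ` Dk n I \<alpha> 0 \<subseteq> ({0} :: (nat set \<Rightarrow> 'k) set)"
  proof
    fix v :: "nat set \<Rightarrow> 'k" assume "v \<in> kc ` Dk n I \<alpha> 0"
    then obtain F where F: "F \<in> Dk n I \<alpha> 0" "v = kc F" by auto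
    then have "finite F" unfolding Dk_def using finite_subset by blast
    then have "F = {}" using F unfolding Dk_def by auto
    then show "v \<in> {0}" using F kc_empty by (simp add: zero_fun_def)
  qed
  then have "fvs.span (kc ` Dk n I \<alpha> 0) \<subseteq> fvs.span ({0} :: (nat set \<Rightarrow> 'k) set)" by (rule fvs.span_mono)
  also have "fvs.span ({0} :: (nat set \<Rightarrow> 'k) set) = {0}" by simp
  finally show ?thesis .
qed

lemma V_borel:
  fixes I1 I2 :: "(nat \<Rightarrow> nat) set"
  assumes mi1: "monomial_ideal n I1" and mi2: "monomial_ideal n I2"
    and deg2: "\<forall>w\<in>I2. d \<le> mdeg n w"
    and EK0: "\<forall>w\<in>I1 \<inter> I2. d < mdeg n w \<longrightarrow>
        (\<forall>q<n. 1 \<le> w q \<longrightarrow> (\<forall>l. q < l \<longrightarrow> w l = 0) \<longrightarrow> w(q := w q - 1) \<in> I1 \<inter> I2)"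
    and am: "\<alpha> \<in> mons n"
  shows "fvs.span (kc ` Dk n I1 \<alpha> k) \<inter> fvs.span (kc ` Dk n I2 \<alpha> k)
       \<subseteq> fvs.span (kc ` Dk n (I1 \<inter> I2) \<alpha> k :: (nat set \<Rightarrow> 'k::field) set)"
proof
  fix x :: "nat set \<Rightarrow> 'k"
  assume x: "x \<in> fvs.span (kc ` Dk n I1 \<alpha> k) \<inter> fvs.span (kc ` Dk n I2 \<alpha> k)"
  show "x \<in> fvs.span (kc ` Dk n (I1 \<inter> I2) \<alpha> k)"
  proof (cases "k = 0")
    case True
    then have "x = 0" using x span_kc0[of n I2 \<alpha>] by auto
    then show ?thesis by (simp add: fvs.span_zero)
  next
    case k0: False
    show ?thesis
    proof (cases "mdeg n \<alpha> < k + d")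
      case True
      have "Dk n I2 \<alpha> k = {}"
      proof (rule ccontr)
        assume "Dk n I2 \<alpha> k \<noteq> {}"
        then obtain F where F: "F \<in> Dk n I2 \<alpha> k" by auto
        then have Fn: "F \<subseteq> {0..<n}" and cF: "card F = k" and ok: "okset I2 \<alpha> F" unfolding Dk_def by auto
        have "d \<le> mdeg n (\<lambda>l. if l \<in> F then \<alpha> l - 1 else \<alpha> l)" using deg2 ok unfolding okset_def by auto
        moreover have "mdeg n (\<lambda>l. if l \<in> F then \<alpha> l - 1 else \<alpha> l) + k = mdeg n \<alpha>"
          using mdeg_minus[OF Fn] ok cF unfolding okset_def by auto
        ultimately show False using True by linarith
      qed
      then have "x = 0" using x by simp
      then show ?thesis by (simp add: fvs.span_zero)
    next
      case False
      then have big: "k + d \<le> mdeg n \<alpha>" by simp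
      define X where "X = {0..<n}"
      obtain k' where kk: "k = Suc k'" using k0 by (cases k) auto
      let ?D0 = "Dk n (I1 \<inter> I2) \<alpha>"
      have mi0: "monomial_ideal n (I1 \<inter> I2)" by (rule mi_Int[OF mi1 mi2])
      have xE1: "x \<in> fvs.span (ee ` Dk n I1 \<alpha> k')" using x Bd_sub_E[OF mi1] kk by blast
      have xE2: "x \<in> fvs.span (ee ` Dk n I2 \<alpha> k')" using x Bd_sub_E[OF mi2] kk by blast
      have xsupp: "\<And>F. x F \<noteq> 0 \<Longrightarrow> F \<in> ?D0 k'"
        using xE1 xE2 unfolding span_ee[OF Dk_fin] Dk_Int by blast
      have dx: "dd X x = 0" using x Bd_ker unfolding X_def by blast
      have "0 < mdeg n \<alpha>" using big kk by simp
      then obtain p where p: "p < n" "1 \<le> \<alpha> p" "\<forall>l. p < l \<longrightarrow> \<alpha> l = 0"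
        using maxvar_exists[OF am] by blast
      have pX: "p \<in> X" using p X_def by simp
      have supp: "x F \<noteq> 0 \<Longrightarrow> F \<subseteq> X \<and> (\<forall>l\<in>F. l \<le> p)" for F
      proof -
        assume "x F \<noteq> 0"
        then have F: "F \<in> ?D0 k'" using xsupp by blast
        then have "F \<subseteq> X" unfolding Dk_def X_def by auto
        moreover have "\<forall>l\<in>F. 1 \<le> \<alpha> l" using F unfolding Dk_def okset_def by auto
        then have "\<forall>l\<in>F. l \<le> p" using p(3) by (metis not_le not_one_le_zero)
        ultimately show ?thesis by blast
      qed
      have xeq: "x = dd X (hs p x)"
      proof (rule ext)
        fix H
        have "dd X (hs p x) H + hs p (dd X x) H = x H"
          by (rule homotopy) (use X_def pX supp in auto)
        moreover have "hs p (dd X x) H = 0" unfolding dx hs_def by simp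
        ultimately show "x H = dd X (hs p x) H" by simp
      qed
      have hsE: "hs p x \<in> fvs.span (ee ` ?D0 k)"
        unfolding span_ee[OF Dk_fin]
      proof (intro CollectI allI impI)
        fix G assume nz: "hs p x G \<noteq> 0"
        then have pG: "p \<in> G" and xG: "x (G - {p}) \<noteq> 0" unfolding hs_def by (auto split: if_splits)
        let ?F = "G - {p}"
        have F: "?F \<in> ?D0 k'" using xsupp xG by blast
        then have Fn: "?F \<subseteq> {0..<n}" and cF: "card ?F = k'" and ok: "okset (I1 \<inter> I2) \<alpha> ?F"
          unfolding Dk_def by auto
        have fF: "finite ?F" using Fn finite_subset by blast
        have Geq: "G = insert p ?F" using pG by auto
        have Gn: "G \<subseteq> {0..<n}" using Fn p(1) Geq by auto
        have cG: "card G = k" using cF fF kk Geq by (metis card_insert_disjoint Diff_iff singletonI)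
        define w where "w = (\<lambda>l. if l \<in> ?F then \<alpha> l - 1 else \<alpha> l)"
        have w0: "w \<in> I1 \<inter> I2" and a1: "\<forall>l\<in>?F. 1 \<le> \<alpha> l" using ok unfolding okset_def w_def by auto
        have "mdeg n w + k' = mdeg n \<alpha>" using mdeg_minus[OF Fn a1] cF unfolding w_def by simp
        then have dw: "d < mdeg n w" using big kk by linarith
        have wp: "1 \<le> w p" using p(2) unfolding w_def by simp
        have wab: "\<forall>l. p < l \<longrightarrow> w l = 0" using p(3) unfolding w_def by auto
        have "w(p := w p - 1) \<in> I1 \<inter> I2" using EK0 w0 dw p(1) wp wab by blast
        moreover have "w(p := w p - 1) = (\<lambda>l. if l \<in> G then \<alpha> l - 1 else \<alpha> l)"
          using pG unfolding w_def by (auto simp: fun_eq_iff)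
        ultimately have "(\<lambda>l. if l \<in> G then \<alpha> l - 1 else \<alpha> l) \<in> I1 \<inter> I2" by simp
        moreover have "\<forall>l\<in>G. 1 \<le> \<alpha> l" using a1 p(2) Geq by auto
        ultimately show "G \<in> ?D0 k" using Gn cG unfolding Dk_def okset_def by auto
      qed
      have "x \<in> dd X ` fvs.span (ee ` ?D0 k)" using xeq hsE by blast
      then show ?thesis using Bd_eq unfolding X_def by metis
    qed
  qed
qed


theorem lemma6p2:
  fixes n r d :: nat and m :: "nat \<Rightarrow> (nat \<Rightarrow> nat)"
  assumes "2 \<le> r"
    and "\<forall>t\<in>{1..r}. m t \<in> mons n"
    and "d = mdeg n (m r)"
    and "\<forall>t\<in>{1..r}. mdeg n (m t) \<le> d"
  shows "(\<forall>g\<in>mingens (Borel n {m r} \<inter> Borel n (m ` {1..r-1})). mdeg n g = d) \<and>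
    (\<forall>i j. int (betti TYPE('k::field) n (Borel n (m ` {1..r})) i j) =
        int (betti TYPE('k) n (Borel n (m ` {1..r-1})) i j)
      + int (betti TYPE('k) n (Borel n {m r}) i j)
      - int (betti TYPE('k) n (Borel n {m r} \<inter> Borel n (m ` {1..r-1})) i j))"
proof -
  let ?T1 = "m ` {1..r-1}" and ?T2 = "{m r}"
  let ?I1 = "Borel n ?T1" and ?I2 = "Borel n ?T2"
  have T1m: "?T1 \<subseteq> mons n" using assms(1,2) by auto
  have T2m: "?T2 \<subseteq> mons n" using assms(1,2) by auto
  have T1d: "\<forall>t\<in>?T1. mdeg n t \<le> d" using assms(1,4) by auto
  have T2d: "\<forall>t\<in>?T2. mdeg n t \<le> d" using assms(3) by auto
  have T2d': "\<forall>t\<in>?T2. d \<le> mdeg n t" using assms(3) by auto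
  have Tun: "m ` {1..r} = ?T1 \<union> ?T2"
  proof -
    have "{1..r} = {1..r-1} \<union> {r}" using assms(1) by auto
    then show ?thesis by auto
  qed
  have Bun: "Borel n (m ` {1..r}) = ?I1 \<union> ?I2" unfolding Tun by (rule Borel_Un[OF T1m T2m])
  have b1: "borel_ideal n ?I1" using Borel_is_borel[OF T1m] .
  have b2: "borel_ideal n ?I2" using Borel_is_borel[OF T2m] .
  have mi1: "monomial_ideal n ?I1" using b1 unfolding borel_ideal_def by blast
  have mi2: "monomial_ideal n ?I2" using b2 unfolding borel_ideal_def by blast
  have deg2: "\<forall>w\<in>?I2. d \<le> mdeg n w" using Borel_deg_ge[OF T2m T2d'] by blast
  have EK0: "\<forall>w\<in>?I1 \<inter> ?I2. d < mdeg n w \<longrightarrow>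
        (\<forall>q<n. 1 \<le> w q \<longrightarrow> (\<forall>l. q < l \<longrightarrow> w l = 0) \<longrightarrow> w(q := w q - 1) \<in> ?I1 \<inter> ?I2)"
    using EK[OF T1m T1d] EK[OF T2m T2d] by blast
  have part1: "\<forall>g\<in>mingens (?I2 \<inter> ?I1). mdeg n g = d"
  proof
    fix g assume g: "g \<in> mingens (?I2 \<inter> ?I1)"
    then have gI: "g \<in> ?I1 \<inter> ?I2" and gmin: "\<forall>h\<in>?I2 \<inter> ?I1. mdvd h g \<longrightarrow> h = g"
      unfolding mingens_def by auto
    have "d \<le> mdeg n g" using deg2 gI by blast
    moreover have "\<not> d < mdeg n g"
    proof
      assume dl: "d < mdeg n g"
      have gm: "g \<in> mons n" using gI mi1 unfolding monomial_ideal_def by blast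
      obtain q where q: "q < n" "1 \<le> g q" "\<forall>l. q < l \<longrightarrow> g l = 0"
        using maxvar_exists[OF gm] dl by auto
      have h: "g(q := g q - 1) \<in> ?I1 \<inter> ?I2" using EK0 gI dl q by blast
      moreover have "mdvd (g(q := g q - 1)) g" unfolding mdvd_def by auto
      ultimately have "g(q := g q - 1) = g" using gmin by blast
      then have "g q - 1 = g q" by (metis fun_upd_same)
      then show False using q(2) by simp
    qed
    ultimately show "mdeg n g = d" by simp
  qed
  have part2: "int (betti TYPE('k) n (?I1 \<union> ?I2) i j) =
        int (betti TYPE('k) n ?I1 i j) + int (betti TYPE('k) n ?I2 i j)
      - int (betti TYPE('k) n (?I1 \<inter> ?I2) i j)" for i j
  proof -
    let ?A = "{a \<in> mons n. mdeg n a = j}"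
    have "int (betti TYPE('k) n (?I1 \<union> ?I2) i j) = (\<Sum>\<alpha>\<in>?A. int (multibetti TYPE('k) n (?I1 \<union> ?I2) i \<alpha>))"
      unfolding betti_def by simp
    also have "\<dots> = (\<Sum>\<alpha>\<in>?A. int (multibetti TYPE('k) n ?I1 i \<alpha>) + int (multibetti TYPE('k) n ?I2 i \<alpha>)
         - int (multibetti TYPE('k) n (?I1 \<inter> ?I2) i \<alpha>))"
    proof (rule sum.cong[OF refl])
      fix \<alpha> assume "\<alpha> \<in> ?A"
      then have am: "\<alpha> \<in> mons n" by simp
      show "int (multibetti TYPE('k) n (?I1 \<union> ?I2) i \<alpha>) = int (multibetti TYPE('k) n ?I1 i \<alpha>)
         + int (multibetti TYPE('k) n ?I2 i \<alpha>) - int (multibetti TYPE('k) n (?I1 \<inter> ?I2) i \<alpha>)"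
        by (rule MV[OF mi1 mi2 V_borel[OF mi1 mi2 deg2 EK0 am]])
    qed
    also have "\<dots> = int (betti TYPE('k) n ?I1 i j) + int (betti TYPE('k) n ?I2 i j)
      - int (betti TYPE('k) n (?I1 \<inter> ?I2) i j)"
      unfolding betti_def by (simp add: sum.distrib sum_subtractf)
    finally show ?thesis .
  qed
  have comm: "?I2 \<inter> ?I1 = ?I1 \<inter> ?I2" by blast
  show ?thesis unfolding Bun
  proof (intro conjI allI)
    show "\<forall>g\<in>mingens (?I2 \<inter> ?I1). mdeg n g = d" by (rule part1)
    fix i j
    show "int (betti TYPE('k) n (?I1 \<union> ?I2) i j) =
        int (betti TYPE('k) n ?I1 i j) + int (betti TYPE('k) n ?I2 i j)
      - int (betti TYPE('k) n (?I2 \<inter> ?I1) i j)"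
      unfolding comm by (rule part2)
  qed
qed


end
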